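(* Let $p,q\in(0,1)$ be parameters of two Bernoulli distributions $[p,1-p]$ and $[q,1-q]$. Let $m\ge1$ be an integer such that $mp$ and $mq$ are integers. Define $l_{p2q}=\binom{m}{mp}q^{mp}(1-q)^{m-mp}$, the likelihood of observing empirical distribution $p$ from $m$ samples when the true distribution is $q$. Define $l_{q2p}=\binom{m}{mq}p^{mq}(1-p)^{m-mq}$ analogously. If $l_{p2q}>l_{q2p}$, then $D_{\chi^2}(p,q)<D_{\chi^2}(q,p)$.
   Context: For Bernoulli parameters $p,q\in(0,1)$, the $\chi^2$ divergence is $D_{\chi^2}(p,q)=\frac{p^2}{q}+\frac{(1-p)^2}{1-q}-1=\frac{(p-q)^2}{q(1-q)}$. *)

theory Defs
  imports Complex_Main
begin

definition chi2_div :: "real \<Rightarrow> real \<Rightarrow> real" where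
  "chi2_div p q = p^2 / q + (1 - p)^2 / (1 - q) - 1"

definition lik :: "nat \<Rightarrow> nat \<Rightarrow> real \<Rightarrow> real" where
  "lik m k q = real (m choose k) * q ^ k * (1 - q) ^ (m - k)"

end

theory Submission
  imports Defs
begin


definition GG :: "real \<Rightarrow> real \<Rightarrow> real" where
  "GG p x = (p+x)*(ln x - ln p) + (2-p-x)*(ln(1-x) - ln(1-p))"
definition G1 :: "real \<Rightarrow> real \<Rightarrow> real" where
  "G1 p x = (ln x - ln p) + (p+x)/x - (ln(1-x) - ln(1-p)) - (2-p-x)/(1-x)"

lemma GG_deriv: "0 < x \<Longrightarrow> x < 1 \<Longrightarrow> DERIV (GG p) x :> G1 p x"
  unfolding GG_def G1_def
  apply (rule derivative_eq_intros refl | simp)+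
  done

lemma G1_deriv: "0 < x \<Longrightarrow> x < 1 \<Longrightarrow> DERIV (G1 p) x :> (x-p)/x^2 + (p-x)/(1-x)^2"
proof -
  assume x: "0 < x" "x < 1"
  then have h: "1 - x \<noteq> 0" by simp
  have "DERIV (G1 p) x :> (1/x - (p/x^2)) + (1/(1-x) - (1-p)/(1-x)^2)"
    unfolding G1_def using x h
    by (auto intro!: derivative_eq_intros simp: field_simps power2_eq_square)
  moreover have "(1/x - (p/x^2)) + (1/(1-x) - (1-p)/(1-x)^2) = (x-p)/x^2 + (p-x)/(1-x)^2"
  proof -
    have "1/x - (p/x^2) = (x-p)/x^2" using x by (simp add: field_simps power2_eq_square)
    moreover have "1/(1-x) - (1-p)/(1-x)^2 = (p-x)/(1-x)^2"
    proof -
      have "1/(1-x) = (1-x)/(1-x)^2" using h by (simp add: power2_eq_square)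
      then show ?thesis by (simp add: diff_divide_distrib[symmetric])
    qed
    ultimately show ?thesis by simp
  qed
  ultimately show ?thesis by simp
qed

lemma ln_bound: assumes "(1::real) \<le> t" shows "2 * ln t \<le> t - 1/t"
proof -
  have "(\<lambda>t. t - 1/t - 2 * ln t) 1 \<le> (\<lambda>t. t - 1/t - 2 * ln t) t"
  proof (rule DERIV_nonneg_imp_nondecreasing[OF assms])
    fix x :: real assume x: "1 \<le> x" "x \<le> t"
    have "DERIV (\<lambda>t. t - 1/t - 2 * ln t) x :> 1 + 1/x^2 - 2/x"
      using x by (auto intro!: derivative_eq_intros simp: field_simps power2_eq_square)
    moreover have "1 + 1/x^2 - 2/x = (1 - 1/x)^2" using x by (simp add: field_simps power2_eq_square)
    ultimately show "\<exists>y. DERIV (\<lambda>t. t - 1/t - 2 * ln t) x :> y \<and> y \<ge> 0" by auto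
  qed
  then show ?thesis by simp
qed

lemma G1_p: "0 < p \<Longrightarrow> p < 1 \<Longrightarrow> G1 p p = 0"
  unfolding G1_def by (simp add: field_simps)

lemma GG_p: "GG p p = 0" unfolding GG_def by simp

lemma GG_1p: "GG p (1-p) = 0" unfolding GG_def by simp

lemma G1_1p: assumes "0 < p" "p \<le> 1/2" shows "G1 p (1-p) \<le> 0"
proof -
  define t where "t = (1-p)/p"
  have t1: "1 \<le> t" using assms by (simp add: t_def field_simps)
  have lt: "ln t = ln (1-p) - ln p" using assms by (simp add: t_def ln_div)
  have tt: "t - 1/t = 1/p - 1/(1-p)" using assms by (simp add: t_def field_simps)
  have "G1 p (1-p) = 2 * ln t - (t - 1/t)"
    unfolding G1_def lt tt using assms by (simp add: field_simps)
  then show ?thesis using ln_bound[OF t1] by simp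
qed

lemma GG_left: assumes "0 < q" "q \<le> p" "p \<le> 1/2" shows "GG p q \<le> 0"
proof -
  have G1nn: "G1 p x \<ge> 0" if x: "q \<le> x" "x \<le> p" for x
  proof -
    have "G1 p x \<ge> G1 p p"
    proof (rule DERIV_nonpos_imp_nonincreasing[OF x(2)])
      fix y assume y: "x \<le> y" "y \<le> p"
      have y0: "0 < y" "y < 1" using y x assms by auto
      have "1/(1-y)^2 \<le> 1/y^2" using y0 y assms
        by (intro divide_left_mono power_mono) auto
      moreover have "0 \<le> p - y" using y by linarith
      ultimately have "(p-y)/(1-y)^2 \<le> (p-y)/y^2"
        by (metis mult_left_mono times_divide_eq_right mult_1_right)
      moreover have "(y-p)/y^2 = - ((p-y)/y^2)" "(p-y)/(1-y)^2 = - ((y-p)/(1-y)^2)"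
        by (simp_all add: minus_divide_left)
      ultimately have "(y-p)/y^2 + (p-y)/(1-y)^2 \<le> 0" by linarith
      then show "\<exists>d. DERIV (G1 p) y :> d \<and> d \<le> 0" using G1_deriv[OF y0] by blast
    qed
    then show ?thesis using G1_p assms by simp
  qed
  have "GG p q \<le> GG p p"
  proof (rule DERIV_nonneg_imp_nondecreasing[OF assms(2)])
    fix y assume y: "q \<le> y" "y \<le> p"
    have y0: "0 < y" "y < 1" using y assms by auto
    show "\<exists>d. DERIV (GG p) y :> d \<and> d \<ge> 0" using GG_deriv[OF y0] G1nn[OF y] by blast
  qed
  then show ?thesis using GG_p by simp
qed

lemma GG_right: assumes "0 < p" "p \<le> 1/2" "1 - p \<le> q" "q < 1" shows "GG p q \<le> 0"
proof -
  have G1np: "G1 p x \<le> 0" if x: "1 - p \<le> x" "x \<le> q" for x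
  proof -
    have "G1 p x \<le> G1 p (1-p)"
    proof (rule DERIV_nonpos_imp_nonincreasing[OF x(1)])
      fix y assume y: "1-p \<le> y" "y \<le> x"
      have y0: "0 < y" "y < 1" using y x assms by auto
      have "1/y^2 \<le> 1/(1-y)^2" using y0 y assms
        by (intro divide_left_mono power_mono) auto
      moreover have "0 \<le> y - p" using y assms by linarith
      ultimately have "(y-p)/y^2 \<le> (y-p)/(1-y)^2"
        by (metis mult_left_mono times_divide_eq_right mult_1_right)
      moreover have "(y-p)/y^2 = - ((p-y)/y^2)" "(p-y)/(1-y)^2 = - ((y-p)/(1-y)^2)"
        by (simp_all add: minus_divide_left)
      ultimately have "(y-p)/y^2 + (p-y)/(1-y)^2 \<le> 0" by linarith
      then show "\<exists>d. DERIV (G1 p) y :> d \<and> d \<le> 0" using G1_deriv[OF y0] by blast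
    qed
    then show ?thesis using G1_1p[OF assms(1,2)] by simp
  qed
  have "GG p q \<le> GG p (1-p)"
  proof (rule DERIV_nonpos_imp_nonincreasing[OF assms(3)])
    fix y assume y: "1-p \<le> y" "y \<le> q"
    have y0: "0 < y" "y < 1" using y assms by auto
    show "\<exists>d. DERIV (GG p) y :> d \<and> d \<le> 0" using GG_deriv[OF y0] G1np[OF y] by blast
  qed
  then show ?thesis using GG_1p by simp
qed

lemma GG_sym: "GG p q = GG (1-p) (1-q)" unfolding GG_def by (simp add: algebra_simps)

lemma GG_nonpos: assumes "0 < p" "p < 1" "0 < q" "q < 1" "q*(1-q) \<le> p*(1-p)"
  shows "GG p q \<le> 0"
proof -
  have sq: "(p - 1/2)^2 \<le> (q-1/2)^2" using assms(5) by (simp add: power2_eq_square algebra_simps)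
  show ?thesis
  proof (cases "p \<le> 1/2")
    case True
    then have "q \<le> p \<or> 1 - p \<le> q" using sq
      by (simp only: abs_le_square_iff[symmetric]) (auto simp: abs_if split: if_splits)
    then show ?thesis using GG_left GG_right assms True by auto
  next
    case False
    then have "1-q \<le> 1-p \<or> 1 - (1-p) \<le> 1-q" using sq
      by (simp only: abs_le_square_iff[symmetric]) (auto simp: abs_if split: if_splits)
    then have "GG (1-p) (1-q) \<le> 0" using GG_left GG_right assms False by auto
    then show ?thesis using GG_sym by simp
  qed
qed



lemma key_ineq: fixes n :: nat assumes "1 \<le> n"
  shows "real (n+1)^(2*n+1) \<le> real n^n * real (n+2)^(n+1)"
proof -
  have n0: "real n > 0" using assms by simp
  have B: "1 + real (n+1) * (- 1/(real n+1)^2) \<le> (1 + - 1/(real n+1)^2)^(n+1)"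
    by (rule Bernoulli_inequality) (simp add: field_simps)
  have e1: "1 + real (n+1) * (- 1/(real n+1)^2) = 1 - 1/(real n+1)"
  proof -
    have r: "real n + 1 > 0" by simp
    have "real (n+1) * (1/(real n+1)^2) = 1/(real n+1)"
      using r by (simp add: power2_eq_square add.commute)
    then show ?thesis by simp
  qed
  have "1 - 1/(real n + 1) \<le> (1 - 1/(real n+1)^2)^(n+1)"
    using B unfolding e1 by simp
  moreover have "1 - 1/(real n + 1) = real n/(real n + 1)" by (simp add: field_simps)
  moreover have "1 - 1/(real n+1)^2 = (real n * (real n + 2))/(real n + 1)^2"
  proof -
    have r2: "(real n+1)^2 \<noteq> 0" by simp
    have "1 - 1/(real n+1)^2 = ((real n+1)^2 - 1)/(real n+1)^2"
      using r2 by (simp add: diff_divide_distrib)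
    also have "(real n+1)^2 - 1 = real n * (real n + 2)" by (simp add: power2_eq_square algebra_simps)
    finally show ?thesis .
  qed
  ultimately have "real n/(real n + 1) \<le> (real n * (real n + 2))^(n+1) / ((real n + 1)^2)^(n+1)"
    by (simp add: power_divide)
  then have ineq: "real n * ((real n + 1)^2)^(n+1) \<le> (real n * (real n + 2))^(n+1) * (real n + 1)"
    by (simp add: field_simps)
  have e3: "((real n+1)^2)^(n+1) = (real n+1)^(2*n+1) * (real n+1)"
  proof -
    have "2*(n+1) = Suc (2*n+1)" by simp
    then show ?thesis by (simp only: power_mult[symmetric] power_Suc2)
  qed
  have e4: "(real n * (real n+2))^(n+1) * (real n+1) = real n * (real n^n * (real n+2)^(n+1) * (real n+1))"
    by (simp only: Suc_eq_plus1[symmetric] power_mult_distrib power_Suc mult_ac)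
  have "real n * ((real n + 1)^(2*n+1) * (real n + 1)) \<le> real n * (real n^n * (real n + 2)^(n+1) * (real n + 1))"
    using ineq by (simp only: e3 e4)
  then have "(real n + 1)^(2*n+1) * (real n + 1) \<le> real n^n * (real n + 2)^(n+1) * (real n + 1)"
    using n0 by (simp only: mult_le_cancel_left_pos)
  then have "(real n + 1)^(2*n+1) \<le> real n^n * (real n + 2)^(n+1)"
    by (smt (verit) mult_le_cancel_right_pos of_nat_0_le_iff)
  then show ?thesis by (simp add: add.commute)
qed

lemma mono_e: fixes k n :: nat assumes "k \<le> n"
  shows "real (k+1)^k * real n^n \<le> real k^k * real (n+1)^n"
  using assms
proof (induction n rule: dec_induct)
  case base then show ?case by (simp add: mult.commute)
next
  case (step n)
  show ?case
  proof (cases "k = 0")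
    case True
    have "real (n+1)^(Suc n) \<le> real (n+2)^(Suc n)" by (intro power_mono) auto
    then show ?thesis using True by simp
  next
    case False
    then have n1: "1 \<le> n" using step by simp
    define a where "a = real (k+1)^k"
    define b where "b = real k^k"
    have a0: "a \<ge> 0" "b \<ge> 0" by (simp_all add: a_def b_def)
    have IH: "a * real n^n \<le> b * real (n+1)^n" using step a_def b_def by simp
    have "a * real n^n * real (n+1)^(n+1) \<le> b * real (n+1)^n * real (n+1)^(n+1)"
      using IH by (simp add: mult_right_mono)
    also have "\<dots> = b * real (n+1)^(2*n+1)"
    proof -
      have "(2::nat)*n+1 = n+(n+1)" by simp
      then show ?thesis by (simp only: power_add mult.assoc)
    qed
    also have "\<dots> \<le> b * (real n^n * real (n+2)^(n+1))"
      using key_ineq[OF n1] a0 by (simp add: mult_left_mono)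
    finally have "real n^n * (a * real (n+1)^(n+1)) \<le> real n^n * (b * real (n+2)^(n+1))"
      by (simp add: algebra_simps)
    then have "a * real (n+1)^(n+1) \<le> b * real (n+2)^(n+1)"
      using n1 by (simp only: mult_le_cancel_left_pos zero_less_power of_nat_0_less_iff)
    then show ?thesis by (simp add: a_def b_def)
  qed
qed

definition gN :: "nat \<Rightarrow> nat \<Rightarrow> real" where
  "gN m k = real (m choose k) * real k^k * real (m-k)^(m-k)"

lemma gN_step: assumes "2*k+1 \<le> m" shows "gN m (k+1) \<le> gN m k"
proof -
  define n where "n = m - k - 1"
  have mk: "m - k = n + 1" "m - (k+1) = n" using assms n_def by auto
  have kn: "k \<le> n" using assms n_def by simp
  have bin: "real (m choose (k+1)) * real (k+1) = real (m choose k) * real (n+1)"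
  proof -
    have "(k+1) * (m choose (k+1)) = m * ((m-1) choose k)" using binomial_absorption[of k m] by simp
    also have "\<dots> = (m-k) * (m choose k)" using binomial_absorb_comp[of m k] by simp
    finally show ?thesis using mk by (metis of_nat_mult mult.commute)
  qed
  have "gN m (k+1) = real (m choose (k+1)) * real (k+1) * (real (k+1)^k * real n^n)"
    unfolding gN_def mk by (simp add: algebra_simps)
  also have "\<dots> = real (m choose k) * real (n+1) * (real (k+1)^k * real n^n)" using bin by simp
  also have "\<dots> \<le> real (m choose k) * real (n+1) * (real k^k * real (n+1)^n)"
    using mono_e[OF kn] by (intro mult_left_mono) auto
  also have "\<dots> = gN m k" unfolding gN_def mk by (simp add: algebra_simps)
  finally show ?thesis .
qed

lemma gN_anti: assumes "i \<le> j" "2*j \<le> m+1" shows "gN m j \<le> gN m i"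
  using assms
proof (induction j rule: dec_induct)
  case base then show ?case by simp
next
  case (step j)
  then have "gN m (j+1) \<le> gN m j" by (intro gN_step) simp
  then show ?case using step by simp
qed

lemma gN_sym: assumes "k \<le> m" shows "gN m (m-k) = gN m k"
  unfolding gN_def using assms binomial_symmetric[OF assms] by (simp add: mult.commute)

lemma gN_cmp: assumes "a \<le> m" "b \<le> m" "b*(m-b) \<le> a*(m-a)" shows "gN m a \<le> gN m b"
proof -
  define a' where "a' = min a (m-a)"
  define b' where "b' = min b (m-b)"
  have ga: "gN m a = gN m a'" unfolding a'_def using gN_sym[OF assms(1)] by (simp add: min_def)
  have gb: "gN m b = gN m b'" unfolding b'_def using gN_sym[OF assms(2)] by (simp add: min_def)
  have pa: "a'*(m-a') = a*(m-a)" unfolding a'_def using assms(1) by (simp add: min_def mult.commute)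
  have pb: "b'*(m-b') = b*(m-b)" unfolding b'_def using assms(2) by (simp add: min_def mult.commute)
  have ha: "2*a' \<le> m" "2*b' \<le> m" unfolding a'_def b'_def by auto
  have "b' \<le> a'"
  proof (rule ccontr)
    assume "\<not> b' \<le> a'"
    then have lt: "a' < b'" by simp
    have "int (b'*(m-b')) - int (a'*(m-a')) = (int b' - int a') * (int m - int a' - int b')"
      using ha by (simp add: of_nat_diff algebra_simps)
    moreover have "(int b' - int a') * (int m - int a' - int b') > 0"
      using lt ha by (intro mult_pos_pos) auto
    ultimately show False using pa pb assms(3) by linarith
  qed
  then have "gN m a' \<le> gN m b'" using ha by (intro gN_anti) auto
  then show ?thesis using ga gb by simp
qed

lemma lik_self: assumes "k \<le> m" "m \<ge> 1" shows "lik m k (real k / real m) = gN m k / real m^m"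
proof -
  have m0: "real m > 0" using assms by simp
  have "1 - real k/real m = real (m-k)/real m" using assms m0 by (simp add: of_nat_diff field_simps)
  then have "lik m k (real k / real m) = real (m choose k) * (real k^k * real (m-k)^(m-k)) / (real m^k * real m^(m-k))"
    unfolding lik_def by (simp add: power_divide)
  also have "real m^k * real m^(m-k) = real m^m" using assms by (simp add: power_add[symmetric])
  finally show ?thesis unfolding gN_def by simp
qed


lemma chi2_formula: assumes "0 < q" "q < 1" shows "chi2_div p q = (p-q)^2/(q*(1-q))"
proof -
  have h: "1 - q \<noteq> 0" "q \<noteq> 0" using assms by auto
  show ?thesis unfolding chi2_div_def using h
    by (simp add: field_simps power2_eq_square)
qed

theorem mainTheorem7:
  fixes p q :: real and m a b :: nat
  assumes "0 < p" "p < 1" "0 < q" "q < 1" "m \<ge> 1"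
    and "real m * p = real a" and "real m * q = real b"
    and "lik m a q > lik m b p"
  shows "chi2_div p q < chi2_div q p"
proof -
  have m0: "real m > 0" using assms(5) by simp
  have pa: "p = real a / real m" using assms(6) m0 by (simp add: field_simps)
  have qb: "q = real b / real m" using assms(7) m0 by (simp add: field_simps)
  have am: "a \<le> m"
  proof -
    have "real a \<le> real m" using assms(6) assms(2) m0
      by (metis less_eq_real_def mult_less_cancel_left_pos mult.right_neutral)
    then show ?thesis by simp
  qed
  have bm: "b \<le> m"
  proof -
    have "real b \<le> real m" using assms(7) assms(4) m0
      by (metis less_eq_real_def mult_less_cancel_left_pos mult.right_neutral)
    then show ?thesis by simp
  qed
  have ma: "real (m - a) = real m * (1 - p)" using am assms(6) by (simp add: of_nat_diff algebra_simps)
  have mb: "real (m - b) = real m * (1 - q)" using bm assms(7) by (simp add: of_nat_diff algebra_simps)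
  have key: "q*(1-q) > p*(1-p)"
  proof (rule ccontr)
    assume "\<not> q*(1-q) > p*(1-p)"
    then have le: "q*(1-q) \<le> p*(1-p)" by simp
    have "real (b*(m-b)) = real m^2 * (q*(1-q))" using mb assms(7)
      by (simp add: power2_eq_square algebra_simps)
    also have "\<dots> \<le> real m^2 * (p*(1-p))" using le by (simp add: mult_left_mono)
    also have "\<dots> = real (a*(m-a))" using ma assms(6)
      by (simp add: power2_eq_square algebra_simps)
    finally have "b*(m-b) \<le> a*(m-a)" by (simp only: of_nat_le_iff)
    then have g: "gN m a \<le> gN m b" using gN_cmp am bm by blast
    define A where "A = lik m a p"
    define B where "B = lik m b q"
    have AB: "A \<le> B" unfolding A_def B_def pa qb
      using lik_self[OF am assms(5)] lik_self[OF bm assms(5)] g m0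
      by (simp add: divide_right_mono)
    define X where "X = (q/p)^a * ((1-q)/(1-p))^(m-a)"
    define Y where "Y = (p/q)^b * ((1-p)/(1-q))^(m-b)"
    have h1: "1 - p \<noteq> 0" "1 - q \<noteq> 0" "p \<noteq> 0" "q \<noteq> 0" using assms by auto
    have LX: "lik m a q = A * X" unfolding A_def X_def lik_def using h1
      by (simp add: power_divide field_simps)
    have LY: "lik m b p = B * Y" unfolding B_def Y_def lik_def using h1
      by (simp add: power_divide field_simps)
    have X0: "X > 0" unfolding X_def using assms by simp
    have Y0: "Y > 0" unfolding Y_def using assms by simp
    have lnX: "ln X = real a * (ln q - ln p) + real (m-a) * (ln (1-q) - ln (1-p))"
      unfolding X_def using assms by (simp add: ln_mult ln_realpow ln_div)
    have lnY: "ln Y = real b * (ln p - ln q) + real (m-b) * (ln (1-p) - ln (1-q))"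
      unfolding Y_def using assms by (simp add: ln_mult ln_realpow ln_div)
    have "ln X - ln Y = real m * GG p q"
      unfolding lnX lnY ma mb GG_def assms(6)[symmetric] assms(7)[symmetric]
      by (simp add: algebra_simps)
    also have "\<dots> \<le> 0" using GG_nonpos[OF assms(1-4) le] m0
      by (simp add: mult_nonneg_nonpos)
    finally have "ln X \<le> ln Y" by simp
    then have XY: "X \<le> Y" using X0 Y0 by simp
    have "A \<ge> 0" unfolding A_def lik_def using assms by simp
    then have "A * X \<le> B * Y" using AB XY X0 by (intro mult_mono) auto
    then show False using LX LY assms(8) by simp
  qed
  have pq: "p \<noteq> q" using key by auto
  have c1: "chi2_div p q = (p-q)^2/(q*(1-q))" using chi2_formula assms by simp
  have c2: "chi2_div q p = (p-q)^2/(p*(1-p))" using chi2_formula[of p q] assms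
    by (simp add: power2_commute)
  have pos: "(p-q)^2 > 0" using pq by simp
  have pp: "p*(1-p) > 0" using assms by simp
  have "(p-q)^2/(q*(1-q)) < (p-q)^2/(p*(1-p))"
    using key pp pos by (intro divide_strict_left_mono) auto
  then show ?thesis using c1 c2 by simp
qed

end
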